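(* Let $K$ be a sequence with continuous leading block distribution under $\mathcal F$-expansion, with associated function $f_K^*$. Let $\mu\in\mathcal F^*$ with $\mu(1)=1$ such that there is $t\in\mathbb{N}$ with $\mu(k)=0$ for all $k>t$. Then $$f_K^*\big(\phi(\mu|t\cdot\widehat F-1)\big)\le\lim_{n\to\infty}\frac{\#\{k\le n:\mathrm{LB}_t(K_k)\le\mu|t\}}{n}.$$
   Context: $F$: $F_1=1,F_2=2,F_{n+2}=F_{n+1}+F_n$; $\phi$ golden ratio, $\omega=\phi^{-1}$. Zeckendorf expansion $m=\sum_{k=1}^M\epsilon(k)F_{M-k+1}$ (unique, $\epsilon(k)\in\{0,1\}$, $\epsilon(1)=1$, $\epsilon(k)\epsilon(k+1)=0$); $\mathrm{LB}_s(m)=(\epsilon(1),\dots,\epsilon(s))$ if $M\ge s$. Blocks of equal length are compared lexicographically (equivalently by $\mathbf b\cdot\widehat F:=\sum_k\mathbf b(k)\omega^{k-1}$). $\mathcal F^*$: infinite 0/1 sequences $\mu$ with $\mu(k)\mu(k+1)=0$ and no tail equal to $(1,0,1,0,\dots)$; $\mu|s=(\mu(1),\dots,\mu(s))$, $\mu\cdot\widehat F=\sum_{k\ge1}\mu(k)\omega^{k-1}$. The map $\mu\mapsto\phi(\mu\cdot\widehat F-1)$ is a bijection from $\{\mu\in\mathcal F^*:\mu(1)=1\}$ onto $(0,1)$. A sequence $K$ of positive integers approaching $\infty$ has continuous leading block distribution under $\mathcal F$-expansion if: for every $s\ge2$ and every leading block $\mathbf b$ of length $s$ the limit $\lim_n\#\{k\le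 n:\mathrm{LB}_s(K_k)=\mathbf b\}/n$ exists; for every $\mu\in\mathcal F^*$ with $\mu(1)=1$ the limit $\lim_{s\to\infty}\lim_n\#\{k\le n:\mathrm{LB}_s(K_k)\le\mu|s\}/n$ exists; and the function $f_K^*:[0,1]\to[0,1]$ with $f_K^*(0)=0$, $f_K^*(1)=1$, $f_K^*(\phi(\mu\cdot\widehat F-1))$ equal to that limit, is continuous and increasing. *)

theory Defs
  imports Complex_Main
begin

text \<open>Fibonacci numbers with F 1 = 1, F 2 = 2 (F 0 = 1 is an unused auxiliary value).\<close>
fun fibF :: "nat \<Rightarrow> nat" where
  "fibF 0 = 1"
| "fibF (Suc 0) = 1"
| "fibF (Suc (Suc n)) = fibF (Suc n) + fibF n"

definition gphi :: real where "gphi = (1 + sqrt 5) / 2"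
definition gomega :: real where "gomega = 1 / gphi"

text \<open>Zeckendorf expansion: list eps = [eps(1),...,eps(M)] (0-based list positions).\<close>
definition zeck_rep :: "nat \<Rightarrow> nat list \<Rightarrow> bool" where
  "zeck_rep m eps \<longleftrightarrow> eps \<noteq> [] \<and> eps ! 0 = 1 \<and> set eps \<subseteq> {0, 1} \<and>
     (\<forall>k. Suc k < length eps \<longrightarrow> eps ! k * eps ! Suc k = 0) \<and>
     m = (\<Sum>k<length eps. eps ! k * fibF (length eps - k))"

definition zeck :: "nat \<Rightarrow> nat list" where
  "zeck m = (THE eps. zeck_rep m eps)"

definition has_LB :: "nat \<Rightarrow> nat \<Rightarrow> bool" where
  "has_LB s m \<longleftrightarrow> s \<le> length (zeck m)"

definition LB :: "nat \<Rightarrow> nat \<Rightarrow> nat list" where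
  "LB s m = take s (zeck m)"

definition is_leading_block :: "nat \<Rightarrow> nat list \<Rightarrow> bool" where
  "is_leading_block s b \<longleftrightarrow> (\<exists>m. has_LB s m \<and> LB s m = b)"

definition blk_le :: "nat list \<Rightarrow> nat list \<Rightarrow> bool" where
  "blk_le b c \<longleftrightarrow> b = c \<or> (\<exists>i < length b. take i b = take i c \<and> b ! i < c ! i)"

text \<open>b \<cdot> Fhat = sum_k b(k) omega^(k-1).\<close>
definition blk_val :: "nat list \<Rightarrow> real" where
  "blk_val b = (\<Sum>k<length b. real (b ! k) * gomega ^ k)"

text \<open>F*: sequences mu(1), mu(2), ... (index 0 is normalised to 0 and unused).\<close>
definition Fstar :: "(nat \<Rightarrow> nat) set" where
  "Fstar = {mu. mu 0 = 0 \<and> (\<forall>k\<ge>1. mu k \<in> {0, 1}) \<and> (\<forall>k\<ge>1. mu k * mu (Suc k) = 0) \<and>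
     \<not> (\<exists>j\<ge>1. \<forall>i. mu (j + 2 * i) = 1 \<and> mu (j + 2 * i + 1) = 0)}"

definition restr :: "(nat \<Rightarrow> nat) \<Rightarrow> nat \<Rightarrow> nat list" where
  "restr mu s = map mu [1..<Suc s]"

definition seq_val :: "(nat \<Rightarrow> nat) \<Rightarrow> real" where
  "seq_val mu = (\<Sum>k. real (mu (Suc k)) * gomega ^ k)"

definition cnt_eq :: "(nat \<Rightarrow> nat) \<Rightarrow> nat \<Rightarrow> nat list \<Rightarrow> nat \<Rightarrow> nat" where
  "cnt_eq K s b n = card {k \<in> {1..n}. has_LB s (K k) \<and> LB s (K k) = b}"

definition cnt_le :: "(nat \<Rightarrow> nat) \<Rightarrow> nat \<Rightarrow> nat list \<Rightarrow> nat \<Rightarrow> nat" where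
  "cnt_le K s b n = card {k \<in> {1..n}. has_LB s (K k) \<and> blk_le (LB s (K k)) b}"

definition limfun :: "(nat \<Rightarrow> nat) \<Rightarrow> (nat \<Rightarrow> nat) \<Rightarrow> real" where
  "limfun K mu = lim (\<lambda>s. lim (\<lambda>n. real (cnt_le K s (restr mu s) n) / real n))"

definition fKstar :: "(nat \<Rightarrow> nat) \<Rightarrow> real \<Rightarrow> real" where
  "fKstar K x = (if x = 0 then 0 else if x = 1 then 1 else
     limfun K (THE mu. mu \<in> Fstar \<and> mu 1 = 1 \<and> gphi * (seq_val mu - 1) = x))"

definition cont_LBD :: "(nat \<Rightarrow> nat) \<Rightarrow> bool" where
  "cont_LBD K \<longleftrightarrow>
     (\<forall>k\<ge>1. K k > 0) \<and> filterlim K at_top sequentially \<and>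
     (\<forall>s\<ge>2. \<forall>b. is_leading_block s b \<longrightarrow>
        convergent (\<lambda>n. real (cnt_eq K s b n) / real n)) \<and>
     (\<forall>mu\<in>Fstar. mu 1 = 1 \<longrightarrow>
        convergent (\<lambda>s. lim (\<lambda>n. real (cnt_le K s (restr mu s) n) / real n))) \<and>
     continuous_on {0..1} (fKstar K) \<and> mono_on {0..1} (fKstar K)"

end

theory Submission imports Defs begin

lemma fibF_pos: "fibF n \<ge> 1"
  by (induction n rule: fibF.induct) auto

lemma fibF_ge: "fibF (Suc n) \<ge> Suc n"
proof (induction n)
  case (Suc n) then show ?case using fibF_pos[of n] by simp
qed simp

lemma fibF_mono: "mono fibF"
proof (rule incseq_SucI)
  fix n show "fibF n \<le> fibF (Suc n)"
    by (cases n) auto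
qed

fun zv :: "nat list \<Rightarrow> nat" where
  "zv [] = 0"
| "zv (x # xs) = x * fibF (Suc (length xs)) + zv xs"

definition adm :: "nat list \<Rightarrow> bool" where
  "adm xs \<longleftrightarrow> set xs \<subseteq> {0, 1} \<and> (\<forall>k. Suc k < length xs \<longrightarrow> xs ! k * xs ! Suc k = 0)"

lemma adm_Nil[simp]: "adm []" by (simp add: adm_def)

lemma adm_Cons: "adm (x # xs) \<longleftrightarrow> x \<in> {0,1} \<and> adm xs \<and> (\<forall>y ys. xs = y # ys \<longrightarrow> x * y = 0)"
proof
  assume a: "adm (x # xs)"
  have "\<forall>k. Suc k < length xs \<longrightarrow> xs ! k * xs ! Suc k = 0"
  proof (intro allI impI)
    fix k assume "Suc k < length xs"
    then show "xs ! k * xs ! Suc k = 0" using a unfolding adm_def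
      by (metis Suc_less_eq length_Cons nth_Cons_Suc)
  qed
  moreover have "\<forall>y ys. xs = y # ys \<longrightarrow> x * y = 0"
    using a unfolding adm_def by (metis length_Cons nth_Cons_0 nth_Cons_Suc zero_less_Suc Suc_less_eq)
  ultimately show "x \<in> {0,1} \<and> adm xs \<and> (\<forall>y ys. xs = y # ys \<longrightarrow> x * y = 0)"
    using a unfolding adm_def by auto
next
  assume a: "x \<in> {0,1} \<and> adm xs \<and> (\<forall>y ys. xs = y # ys \<longrightarrow> x * y = 0)"
  show "adm (x # xs)" unfolding adm_def
  proof (intro conjI allI impI)
    show "set (x # xs) \<subseteq> {0, 1}" using a by (auto simp: adm_def)
  next
    fix k assume k: "Suc k < length (x # xs)"
    show "(x # xs) ! k * (x # xs) ! Suc k = 0"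
    proof (cases k)
      case 0 then show ?thesis using a k by (cases xs) auto
    next
      case (Suc j) then show ?thesis using a k by (auto simp: adm_def)
    qed
  qed
qed

lemma zv_bound: "adm xs \<Longrightarrow> zv xs < fibF (Suc (length xs))"
proof (induction "length xs" arbitrary: xs rule: less_induct)
  case less
  show ?case
  proof (cases xs)
    case Nil then show ?thesis by simp
  next
    case (Cons x xs')
    have x: "x \<in> {0,1}" and a': "adm xs'" and nadj: "\<forall>y ys. xs' = y # ys \<longrightarrow> x * y = 0"
      using less.prems Cons by (auto simp: adm_Cons)
    have ih': "zv xs' < fibF (Suc (length xs'))" using less.hyps[of xs'] Cons a' by simp
    show ?thesis
    proof (cases "x = 0")
      case True then show ?thesis using ih' Cons fibF_mono
        by (simp add: mono_def)
    next
      case False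
      then have x1: "x = 1" using x by auto
      show ?thesis
      proof (cases xs')
        case Nil then show ?thesis using Cons x1 by simp
      next
        case (Cons y ys)
        have y0: "y = 0" using nadj Cons x1 by auto
        have ays: "adm ys" using a' Cons by (simp add: adm_Cons)
        have "zv ys < fibF (Suc (length ys))" using less.hyps[of ys] ays \<open>xs = x # xs'\<close> Cons by simp
        then show ?thesis using \<open>xs = x # xs'\<close> Cons x1 y0 by simp
      qed
    qed
  qed
qed

lemma zv_unique: "length xs = length ys \<Longrightarrow> adm xs \<Longrightarrow> adm ys \<Longrightarrow> zv xs = zv ys \<Longrightarrow> xs = ys"
proof (induction xs ys rule: list_induct2)
  case Nil then show ?case by simp
next
  case (Cons x xs y ys)
  have x: "x \<in> {0,1}" and y: "y \<in> {0,1}" and ax: "adm xs" and ay: "adm ys"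
    using Cons.prems by (auto simp: adm_Cons)
  have bx: "zv xs < fibF (Suc (length xs))" using zv_bound[OF ax] .
  have by': "zv ys < fibF (Suc (length ys))" using zv_bound[OF ay] .
  have "x = y"
  proof (rule ccontr)
    assume "x \<noteq> y"
    then have "(x = 1 \<and> y = 0) \<or> (x = 0 \<and> y = 1)" using x y by auto
    then show False using Cons.prems(3) bx by' Cons.hyps(1) by auto
  qed
  then show ?case using Cons by (simp add: adm_Cons)
qed

lemma zv_exists: "m < fibF (Suc M) \<Longrightarrow> \<exists>xs. length xs = M \<and> adm xs \<and> zv xs = m"
proof (induction M arbitrary: m rule: less_induct)
  case (less M)
  show ?case
  proof (cases M)
    case 0 then show ?thesis using less.prems by (intro exI[of _ "[]"]) simp
  next
    case (Suc N)
    show ?thesis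
    proof (cases N)
      case 0
      then have "m < 2" using less.prems Suc by simp
      then show ?thesis using Suc 0 by (intro exI[of _ "[m]"]) (auto simp: adm_def)
    next
      case (Suc L)
      show ?thesis
      proof (cases "m < fibF (Suc N)")
        case True
        then obtain ys where "length ys = N" "adm ys" "zv ys = m"
          using less.IH[of N] \<open>M = Suc N\<close> by auto
        then show ?thesis using \<open>M = Suc N\<close>
          by (intro exI[of _ "0 # ys"]) (simp add: adm_Cons)
      next
        case False
        have "m < fibF (Suc N) + fibF N" using less.prems \<open>M = Suc N\<close> Suc by simp
        then have "m - fibF (Suc N) < fibF (Suc L)" using False Suc by simp
        then obtain ys where ys: "length ys = L" "adm ys" "zv ys = m - fibF (Suc N)"
          using less.IH[of L] \<open>M = Suc N\<close> Suc by auto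
        show ?thesis using \<open>M = Suc N\<close> Suc ys False
          by (intro exI[of _ "1 # 0 # ys"]) (simp add: adm_Cons)
      qed
    qed
  qed
qed

lemma zv_sum: "(\<Sum>k<length eps. eps ! k * fibF (length eps - k)) = zv eps"
proof (induction eps)
  case (Cons x xs)
  show ?case using Cons unfolding length_Cons sum.lessThan_Suc_shift by simp
qed simp

lemma zeck_rep_iff: "zeck_rep m eps \<longleftrightarrow> eps \<noteq> [] \<and> eps ! 0 = 1 \<and> adm eps \<and> m = zv eps"
  unfolding zeck_rep_def adm_def zv_sum by auto

lemma dropWhile_zv: "zv (dropWhile (\<lambda>x. x = 0) xs) = zv xs"
  by (induction xs) auto

lemma dropWhile_adm: "adm xs \<Longrightarrow> adm (dropWhile (\<lambda>x. x = 0) xs)"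
  by (induction xs) (auto simp: adm_Cons)

lemma zeck_rep_exists: "m > 0 \<Longrightarrow> \<exists>eps. zeck_rep m eps"
proof -
  assume m: "m > 0"
  have "m < fibF (Suc (Suc m))" using fibF_ge[of "Suc m"] by simp
  then obtain xs where xs: "adm xs" "zv xs = m" using zv_exists by blast
  define ys where "ys = dropWhile (\<lambda>x. x = 0) xs"
  have ys1: "adm ys" "zv ys = m" using xs dropWhile_zv dropWhile_adm ys_def by auto
  have ne: "ys \<noteq> []" using ys1 m by auto
  have "hd ys \<noteq> 0" using hd_dropWhile[of "\<lambda>x. x = 0" xs] ne ys_def by auto
  moreover have "hd ys \<in> {0,1}" using ys1 ne unfolding adm_def by (meson hd_in_set subsetD)
  ultimately have "ys ! 0 = 1" using ne by (simp add: hd_conv_nth)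
  then show ?thesis using ys1 ne by (auto simp: zeck_rep_iff)
qed

lemma zeck_rep_len: "zeck_rep m eps \<Longrightarrow> fibF (length eps) \<le> m \<and> m < fibF (Suc (length eps))"
proof -
  assume z: "zeck_rep m eps"
  then obtain ys where e: "eps = 1 # ys" and a: "adm eps" and mm: "m = zv eps"
    by (cases eps) (auto simp: zeck_rep_iff)
  show ?thesis using zv_bound[OF a] e mm by simp
qed

lemma zeck_rep_unique: "zeck_rep m e1 \<Longrightarrow> zeck_rep m e2 \<Longrightarrow> e1 = e2"
proof -
  assume z1: "zeck_rep m e1" and z2: "zeck_rep m e2"
  have l: "length e1 = length e2"
  proof (rule ccontr)
    assume "length e1 \<noteq> length e2"
    then have "Suc (length e1) \<le> length e2 \<or> Suc (length e2) \<le> length e1" by auto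
    then show False using zeck_rep_len[OF z1] zeck_rep_len[OF z2] fibF_mono
      by (auto simp: mono_def) (meson leD le_trans)+
  qed
  show ?thesis using zv_unique[OF l] z1 z2 by (auto simp: zeck_rep_iff)
qed

lemma zeck_valid: "m > 0 \<Longrightarrow> zeck_rep m (zeck m)"
  unfolding zeck_def using zeck_rep_exists zeck_rep_unique by (metis theI)

lemma zeck_props: "m > 0 \<Longrightarrow> zeck m \<noteq> [] \<and> zeck m ! 0 = 1 \<and> set (zeck m) \<subseteq> {0,1}"
  using zeck_valid[of m] by (auto simp: zeck_rep_iff adm_def)

lemma LB_len: "has_LB s m \<Longrightarrow> length (LB s m) = s"
  by (simp add: has_LB_def LB_def)

lemma LB_set: "m > 0 \<Longrightarrow> set (LB s m) \<subseteq> {0,1}"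
  using zeck_props[of m] set_take_subset[of s "zeck m"] by (auto simp: LB_def)

lemma LB_one: "m > 0 \<Longrightarrow> has_LB 1 m \<and> LB 1 m = [1]"
  using zeck_props[of m] by (cases "zeck m") (auto simp: has_LB_def LB_def)

lemma blk_le_take: "blk_le b c \<Longrightarrow> blk_le (take t b) (take t c)"
  unfolding blk_le_def
proof (elim disjE exE conjE)
  fix i assume i: "i < length b" "take i b = take i c" "b ! i < c ! i"
  show "take t b = take t c \<or> (\<exists>i<length (take t b). take i (take t b) = take i (take t c) \<and> take t b ! i < take t c ! i)"
  proof (cases "i < t")
    case True
    then show ?thesis using i by (intro disjI2 exI[of _ i]) (auto simp: min_def)
  next
    case False
    then have "take t b = take t (take i b)" "take t c = take t (take i c)" by (auto simp: min_def)
    then show ?thesis using i by simp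
  qed
qed simp

lemma restr_take: "t \<le> s \<Longrightarrow> take t (restr mu s) = restr mu t"
  by (simp add: restr_def take_map take_upt del: upt_Suc)

lemma cnt_le_mono:
  assumes "t \<le> s"
  shows "cnt_le K s (restr mu s) n \<le> cnt_le K t (restr mu t) n"
  unfolding cnt_le_def
proof (rule card_mono)
  show "finite {k \<in> {1..n}. has_LB t (K k) \<and> blk_le (LB t (K k)) (restr mu t)}" by simp
  show "{k \<in> {1..n}. has_LB s (K k) \<and> blk_le (LB s (K k)) (restr mu s)}
    \<subseteq> {k \<in> {1..n}. has_LB t (K k) \<and> blk_le (LB t (K k)) (restr mu t)}"
  proof safe
    fix k assume "has_LB s (K k)" "blk_le (LB s (K k)) (restr mu s)"
    then show "has_LB t (K k)" using assms by (simp add: has_LB_def)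
    have "LB t (K k) = take t (LB s (K k))" using assms by (simp add: LB_def min_def)
    then show "blk_le (LB t (K k)) (restr mu t)"
      using blk_le_take[OF \<open>blk_le (LB s (K k)) (restr mu s)\<close>, of t] restr_take[OF assms] by simp
  qed
qed

lemma cnt_le_sum:
  fixes t :: nat and b :: "nat list" and K :: "nat \<Rightarrow> nat"
  assumes pos: "\<forall>k\<ge>1. K k > 0"
  defines "C \<equiv> {c. length c = t \<and> set c \<subseteq> {0,1} \<and> blk_le c b}"
  shows "cnt_le K t b n = (\<Sum>c\<in>C. cnt_eq K t c n)"
proof -
  define A where "A = {k \<in> {1..n}. has_LB t (K k) \<and> blk_le (LB t (K k)) b}"
  have fC: "finite C"
  proof (rule finite_subset)
    show "C \<subseteq> {c. set c \<subseteq> {0,1} \<and> length c = t}" unfolding C_def by auto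
    show "finite {c. set c \<subseteq> {0,1::nat} \<and> length c = t}" by (rule finite_lists_length_eq) simp
  qed
  have img: "(\<lambda>k. LB t (K k)) ` A \<subseteq> C"
  proof
    fix c assume "c \<in> (\<lambda>k. LB t (K k)) ` A"
    then obtain k where k: "k \<in> A" "c = LB t (K k)" by auto
    then have "K k > 0" using pos A_def by auto
    then show "c \<in> C" using LB_len LB_set[of "K k" t] k unfolding A_def C_def by auto
  qed
  have "card A = (\<Sum>k\<in>A. 1)" by simp
  also have "\<dots> = (\<Sum>c\<in>C. \<Sum>k\<in>{k. k \<in> A \<and> LB t (K k) = c}. 1)"
    by (rule sum.group[symmetric, OF _ fC img]) (simp add: A_def)
  also have "\<dots> = (\<Sum>c\<in>C. cnt_eq K t c n)"
  proof (rule sum.cong)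
    fix c assume "c \<in> C"
    then have "{k. k \<in> A \<and> LB t (K k) = c} = {k \<in> {1..n}. has_LB t (K k) \<and> LB t (K k) = c}"
      unfolding A_def C_def by auto
    then show "(\<Sum>k\<in>{k. k \<in> A \<and> LB t (K k) = c}. 1) = cnt_eq K t c n"
      by (simp add: cnt_eq_def)
  qed simp
  finally show ?thesis by (simp add: cnt_le_def A_def)
qed

lemma cnt_le_conv:
  assumes "cont_LBD K" "t \<ge> 1"
  shows "convergent (\<lambda>n. real (cnt_le K t b n) / real n)"
proof (cases "t = 1")
  case True
  have pos: "\<forall>k\<ge>1. K k > 0" using assms by (simp add: cont_LBD_def)
  show ?thesis
  proof (cases "blk_le [1] b")
    case bl: True
    have "\<And>n. cnt_le K t b n = n"
    proof -
      fix n
      have "{k \<in> {1..n}. has_LB t (K k) \<and> blk_le (LB t (K k)) b} = {1..n}"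
        using LB_one pos bl True by auto
      then show "cnt_le K t b n = n" by (simp add: cnt_le_def)
    qed
    then have "\<forall>\<^sub>F n in sequentially. 1 = real (cnt_le K t b n) / real n"
      by (auto simp: eventually_sequentially intro!: exI[of _ 1])
    then have "(\<lambda>n. real (cnt_le K t b n) / real n) \<longlonglongrightarrow> 1"
      using Lim_transform_eventually[of "\<lambda>n. 1::real" 1 sequentially] by auto
    then show ?thesis by (auto simp: convergent_def)
  next
    case bl: False
    have "\<And>n. cnt_le K t b n = 0"
    proof -
      fix n
      have "{k \<in> {1..n}. has_LB t (K k) \<and> blk_le (LB t (K k)) b} = {}"
        using LB_one pos bl True by auto
      then show "cnt_le K t b n = 0" by (simp add: cnt_le_def)
    qed
    then show ?thesis by (simp add: convergent_const)
  qed
next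
  case False
  then have t2: "t \<ge> 2" using assms by simp
  have pos: "\<forall>k\<ge>1. K k > 0" using assms by (simp add: cont_LBD_def)
  have conv: "\<And>c. is_leading_block t c \<Longrightarrow> convergent (\<lambda>n. real (cnt_eq K t c n) / real n)"
    using assms t2 by (simp add: cont_LBD_def)
  define C where "C = {c. length c = t \<and> set c \<subseteq> {0,1::nat} \<and> blk_le c b}"
  have "(\<lambda>n. real (cnt_le K t b n) / real n) = (\<lambda>n. \<Sum>c\<in>C. real (cnt_eq K t c n) / real n)"
    using cnt_le_sum[OF pos, of t b] by (simp add: C_def sum_divide_distrib)
  moreover have "convergent (\<lambda>n. \<Sum>c\<in>C. real (cnt_eq K t c n) / real n)"
  proof (rule convergent_sum)
    fix c
    show "convergent (\<lambda>n. real (cnt_eq K t c n) / real n)"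
    proof (cases "is_leading_block t c")
      case True then show ?thesis using conv by simp
    next
      case False
      then have "\<And>n. cnt_eq K t c n = 0"
        unfolding cnt_eq_def is_leading_block_def by auto
      then show ?thesis by (simp add: convergent_const)
    qed
  qed
  ultimately show ?thesis by simp
qed

lemma gphi_sq: "gphi ^ 2 = gphi + 1"
  unfolding gphi_def by (simp add: power2_eq_square field_simps)

lemma gphi_gt1: "gphi > 1"
proof -
  have "sqrt 5 > 1" by simp
  then show ?thesis unfolding gphi_def by simp
qed

lemma om_pos: "gomega > 0" using gphi_gt1 by (simp add: gomega_def)
lemma om_lt1: "gomega < 1" using gphi_gt1 by (simp add: gomega_def)
lemma phi_om: "gphi * gomega = 1" using gphi_gt1 by (simp add: gomega_def)
lemma om_eq: "gomega * (1 + gomega) = 1"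
proof -
  have "gomega * (1 + gomega) = (gphi + 1) / gphi ^ 2"
    unfolding gomega_def using gphi_gt1 by (simp add: field_simps power2_eq_square)
  then show ?thesis using gphi_sq gphi_gt1 by simp
qed
lemma om_eq2: "gomega * gomega * (1 + gomega) = gomega"
  using om_eq by (metis mult.assoc mult.right_neutral)

definition T :: "(nat \<Rightarrow> nat) \<Rightarrow> nat \<Rightarrow> real" where
  "T a p = (\<Sum>k. real (a (p + k)) * gomega ^ k)"

lemma Fstar_01: "a \<in> Fstar \<Longrightarrow> k \<ge> 1 \<Longrightarrow> a k = 0 \<or> a k = 1"
  unfolding Fstar_def by auto

lemma Fstar_adj: "a \<in> Fstar \<Longrightarrow> k \<ge> 1 \<Longrightarrow> a k * a (Suc k) = 0"
  unfolding Fstar_def by auto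

lemma T_summable: assumes "a \<in> Fstar" "p \<ge> 1"
  shows "summable (\<lambda>k. real (a (p + k)) * gomega ^ k)"
proof (rule summable_comparison_test[of _ "\<lambda>k. gomega ^ k"])
  show "\<exists>N. \<forall>n\<ge>N. norm (real (a (p + n)) * gomega ^ n) \<le> gomega ^ n"
  proof (intro exI allI impI)
    fix n
    have "a (p + n) = 0 \<or> a (p + n) = 1" using Fstar_01[OF assms(1)] assms(2) by simp
    then show "norm (real (a (p + n)) * gomega ^ n) \<le> gomega ^ n" using om_pos by auto
  qed
  show "summable (\<lambda>k. gomega ^ k)" using om_pos om_lt1 by (simp add: summable_geometric)
qed

lemma T_rec: assumes "a \<in> Fstar" "p \<ge> 1"
  shows "T a p = real (a p) + gomega * T a (Suc p)"
proof -
  have s: "summable (\<lambda>k. real (a (p + k)) * gomega ^ k)" by (rule T_summable[OF assms])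
  have s2: "summable (\<lambda>k. real (a (Suc p + k)) * gomega ^ k)" by (rule T_summable) (use assms in auto)
  have "(\<Sum>k. real (a (p + Suc k)) * gomega ^ Suc k) = T a p - real (a p)"
    using suminf_split_head[OF s] by (simp add: T_def)
  moreover have "(\<Sum>k. real (a (p + Suc k)) * gomega ^ Suc k) = gomega * T a (Suc p)"
    unfolding T_def using suminf_mult[OF s2, of gomega]
    by (simp add: algebra_simps)
  ultimately show ?thesis by simp
qed

lemma T_nonneg: "a \<in> Fstar \<Longrightarrow> p \<ge> 1 \<Longrightarrow> T a p \<ge> 0"
  unfolding T_def using om_pos by (intro suminf_nonneg T_summable) auto

lemma partial_shift:
  "(\<Sum>k<Suc M. real (a (p + k)) * gomega ^ k) = real (a p) + gomega * (\<Sum>k<M. real (a (Suc p + k)) * gomega ^ k)"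
  unfolding sum.lessThan_Suc_shift by (simp add: sum_distrib_left algebra_simps)

lemma partial_bound: assumes "a \<in> Fstar"
  shows "p \<ge> 1 \<Longrightarrow> (\<Sum>k<N. real (a (p + k)) * gomega ^ k) < 1 + gomega"
proof (induction N arbitrary: p rule: less_induct)
  case (less N)
  show ?case
  proof (cases N)
    case 0 then show ?thesis using om_pos by simp
  next
    case (Suc M)
    have ih1: "(\<Sum>k<M. real (a (Suc p + k)) * gomega ^ k) < 1 + gomega"
      using less.IH[of M "Suc p"] Suc less.prems by simp
    show ?thesis
    proof (cases "a p = 0")
      case True
      have "gomega * (\<Sum>k<M. real (a (Suc p + k)) * gomega ^ k) < gomega * (1 + gomega)"
        using ih1 om_pos by simp
      then show ?thesis using Suc True partial_shift[of a p M] om_eq om_pos by simp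
    next
      case False
      then have ap: "a p = 1" using Fstar_01[OF assms less.prems] by simp
      then have ap1: "a (Suc p) = 0" using Fstar_adj[OF assms less.prems] by simp
      show ?thesis
      proof (cases M)
        case 0 then show ?thesis using Suc ap om_pos by simp
      next
        case (Suc L)
        have ih2: "(\<Sum>k<L. real (a (Suc (Suc p) + k)) * gomega ^ k) < 1 + gomega"
          using less.IH[of L "Suc (Suc p)"] Suc \<open>N = Suc M\<close> by simp
        have "(\<Sum>k<N. real (a (p + k)) * gomega ^ k)
            = 1 + gomega * gomega * (\<Sum>k<L. real (a (Suc (Suc p) + k)) * gomega ^ k)"
          using partial_shift[of a p M] partial_shift[of a "Suc p" L] \<open>N = Suc M\<close> Suc ap ap1 by simp
        also have "\<dots> < 1 + gomega * gomega * (1 + gomega)"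
          using ih2 om_pos by simp
        finally show ?thesis using om_eq2 by simp
      qed
    qed
  qed
qed

lemma T_le: assumes "a \<in> Fstar" "p \<ge> 1" shows "T a p \<le> 1 + gomega"
  unfolding T_def
proof (rule suminf_le_const[OF T_summable[OF assms]])
  fix n show "(\<Sum>k<n. real (a (p + k)) * gomega ^ k) \<le> 1 + gomega"
    using partial_bound[OF assms(1) assms(2), of n] by simp
qed

lemma T_zero_lt: assumes "a \<in> Fstar" "p \<ge> 1" "a p = 0"
  shows "T a p < 1 + gomega"
proof -
  have "T a p = gomega * T a (Suc p)" using T_rec[OF assms(1,2)] assms(3) by simp
  also have "\<dots> \<le> gomega * (1 + gomega)" using T_le[OF assms(1), of "Suc p"] om_pos assms(2) by simp
  finally show ?thesis using om_eq om_pos by simp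
qed

lemma T_lt_aux: assumes "a \<in> Fstar"
  shows "p \<ge> 1 \<Longrightarrow> \<not> (a (p + 2 * i) = 1 \<and> a (p + 2 * i + 1) = 0) \<Longrightarrow> T a p < 1 + gomega"
proof (induction i arbitrary: p)
  case 0
  show ?case
  proof (cases "a p = 0")
    case True then show ?thesis using T_zero_lt[OF assms 0(1)] by simp
  next
    case False
    then have "a p = 1" using Fstar_01[OF assms 0(1)] by simp
    moreover then have "a (Suc p) = 0" using Fstar_adj[OF assms 0(1)] by simp
    ultimately show ?thesis using 0(2) by simp
  qed
next
  case (Suc i)
  show ?case
  proof (cases "a p = 0")
    case True then show ?thesis using T_zero_lt[OF assms Suc.prems(1)] by simp
  next
    case False
    then have ap: "a p = 1" using Fstar_01[OF assms Suc.prems(1)] by simp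
    then have ap1: "a (Suc p) = 0" using Fstar_adj[OF assms Suc.prems(1)] by simp
    have "T a (Suc (Suc p)) < 1 + gomega"
      using Suc.IH[of "Suc (Suc p)"] Suc.prems by (simp add: algebra_simps)
    moreover have "T a p = 1 + gomega * gomega * T a (Suc (Suc p))"
      using T_rec[OF assms Suc.prems(1)] T_rec[OF assms, of "Suc p"] Suc.prems(1) ap ap1 by simp
    ultimately have "T a p < 1 + gomega * gomega * (1 + gomega)"
      using om_pos by simp
    then show ?thesis using om_eq2 by simp
  qed
qed

lemma T_lt: assumes "a \<in> Fstar" "p \<ge> 1" shows "T a p < 1 + gomega"
proof -
  obtain i where "\<not> (a (p + 2 * i) = 1 \<and> a (p + 2 * i + 1) = 0)"
    using assms unfolding Fstar_def by blast
  then show ?thesis using T_lt_aux[OF assms(1,2)] by blast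
qed

lemma T_step: assumes "a \<in> Fstar" "b \<in> Fstar" "p \<ge> 1" "T a p = T b p"
  shows "a p = b p \<and> T a (Suc p) = T b (Suc p)"
proof -
  have less1: "T c p < 1" if c: "c \<in> Fstar" "c p = 0" for c
  proof -
    have "T c p = gomega * T c (Suc p)" using T_rec[OF c(1) assms(3)] c(2) by simp
    also have "\<dots> < gomega * (1 + gomega)" using T_lt[OF c(1), of "Suc p"] om_pos by simp
    finally show ?thesis using om_eq by simp
  qed
  have ge1: "T c p \<ge> 1" if c: "c \<in> Fstar" "c p = 1" for c
    using T_rec[OF c(1) assms(3)] c(2) T_nonneg[OF c(1), of "Suc p"] om_pos by simp
  have "a p = b p"
  proof (rule ccontr)
    assume "a p \<noteq> b p"
    then have "(a p = 1 \<and> b p = 0) \<or> (a p = 0 \<and> b p = 1)"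
      using Fstar_01[OF assms(1,3)] Fstar_01[OF assms(2,3)] by auto
    then show False using less1 ge1 assms by force
  qed
  moreover then have "gomega * T a (Suc p) = gomega * T b (Suc p)"
    using T_rec[OF assms(1,3)] T_rec[OF assms(2,3)] assms(4) by linarith
  then have "T a (Suc p) = T b (Suc p)" using om_pos by simp
  ultimately show ?thesis by simp
qed

lemma T_inj: assumes "a \<in> Fstar" "b \<in> Fstar"
  shows "p \<ge> 1 \<Longrightarrow> T a p = T b p \<Longrightarrow> a (p + j) = b (p + j)"
proof (induction j arbitrary: p)
  case 0 then show ?case using T_step[OF assms] by simp
next
  case (Suc j)
  have "T a (Suc p) = T b (Suc p)" using T_step[OF assms Suc.prems] by simp
  then show ?case using Suc.IH[of "Suc p"] by simp
qed

lemma seq_val_T: "seq_val a = T a 1"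
  unfolding seq_val_def T_def by simp

lemma Fstar_unique: assumes "a \<in> Fstar" "b \<in> Fstar" "seq_val a = seq_val b"
  shows "a = b"
proof
  fix k
  show "a k = b k"
  proof (cases k)
    case 0 then show ?thesis using assms unfolding Fstar_def by simp
  next
    case (Suc j) then show ?thesis using T_inj[OF assms(1,2), of 1 j] assms(3) seq_val_T by simp
  qed
qed

theorem lemma5p17:
  fixes K :: "nat \<Rightarrow> nat" and mu :: "nat \<Rightarrow> nat" and t :: nat
  assumes "cont_LBD K"
    and "mu \<in> Fstar" and "mu 1 = 1"
    and "\<forall>k>t. mu k = 0"
  shows "fKstar K (gphi * (blk_val (restr mu t) - 1))
           \<le> lim (\<lambda>n. real (cnt_le K t (restr mu t) n) / real n)"
proof -
  have t1: "t \<ge> 1"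
  proof (rule ccontr)
    assume "\<not> t \<ge> 1" then have "t = 0" by simp
    then show False using assms(3,4) by auto
  qed
  define L where "L s = lim (\<lambda>n. real (cnt_le K s (restr mu s) n) / real n)" for s
  have convL: "(\<lambda>n. real (cnt_le K s (restr mu s) n) / real n) \<longlonglongrightarrow> L s" if "s \<ge> 1" for s
    using cnt_le_conv[OF assms(1) that] unfolding L_def by (simp add: convergent_LIMSEQ_iff)
  have Lmono: "L s \<le> L t" if "s \<ge> t" for s
  proof (rule LIMSEQ_le[OF convL convL])
    show "s \<ge> 1" using that t1 by simp
    show "t \<ge> 1" by (rule t1)
    show "\<exists>N. \<forall>n\<ge>N. real (cnt_le K s (restr mu s) n) / real n \<le> real (cnt_le K t (restr mu t) n) / real n"
      using cnt_le_mono[OF that, of K mu] by (auto intro!: divide_right_mono)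
  qed
  have Lt0: "L t \<ge> 0"
    by (rule LIMSEQ_le_const[OF convL[OF t1]]) auto
  have "convergent L"
    using assms(1,2,3) unfolding cont_LBD_def L_def by blast
  then have "L \<longlonglongrightarrow> lim L" by (simp add: convergent_LIMSEQ_iff)
  then have lim_le: "limfun K mu \<le> L t"
    unfolding limfun_def L_def[symmetric]
    by (rule LIMSEQ_le_const2) (use Lmono in auto)
  have bv: "blk_val (restr mu t) = seq_val mu"
  proof -
    have "blk_val (restr mu t) = (\<Sum>k<t. real (mu (Suc k)) * gomega ^ k)"
      unfolding blk_val_def restr_def by (simp del: upt_Suc)
    also have "\<dots> = seq_val mu"
      unfolding seq_val_def
      by (rule suminf_finite[symmetric]) (use assms(4) in auto)
    finally show ?thesis .
  qed
  define x where "x = gphi * (seq_val mu - 1)"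
  have "seq_val mu < 1 + gomega" using T_lt[OF assms(2), of 1] seq_val_T by simp
  then have "x < gphi * gomega" unfolding x_def using gphi_gt1 by simp
  then have x1: "x \<noteq> 1" using phi_om by simp
  show ?thesis
  proof (cases "x = 0")
    case True
    then show ?thesis using Lt0 bv x_def by (simp add: fKstar_def L_def)
  next
    case False
    have the: "(THE mu'. mu' \<in> Fstar \<and> mu' 1 = 1 \<and> gphi * (seq_val mu' - 1) = x) = mu"
    proof (rule the_equality)
      show "mu \<in> Fstar \<and> mu 1 = 1 \<and> gphi * (seq_val mu - 1) = x" using assms x_def by simp
      fix mu' assume "mu' \<in> Fstar \<and> mu' 1 = 1 \<and> gphi * (seq_val mu' - 1) = x"
      then have "mu' \<in> Fstar" "seq_val mu' = seq_val mu" using x_def gphi_gt1 by auto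
      then show "mu' = mu" using Fstar_unique assms(2) by blast
    qed
    have "fKstar K x = limfun K mu" using False x1 the by (simp add: fKstar_def)
    then show ?thesis using lim_le bv x_def L_def by simp
  qed
qed

end
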